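(* Let $f(x)=\sum_{k=0}^\infty a_k x^k$ be an entire function with $a_k>0$ for all $k\ge 0$, and suppose that $$2\sqrt[3]{2}\le q_2(f)\le q_3(f)\le q_4(f)\le \cdots .$$ Then all but a finite number of zeros of $f$ are real and simple.
   Context: For an entire function $f(z)=\sum_{k=0}^\infty a_k z^k$ with real nonzero coefficients, the second quotients of its Taylor coefficients are $q_n(f):=\frac{a_{n-1}^2}{a_{n-2}a_n}$ for $n\ge 2$. *)

theory Defs
  imports "HOL-Analysis.Analysis"
begin

definition second_quotient :: "(nat \<Rightarrow> real) \<Rightarrow> nat \<Rightarrow> real" where
  "second_quotient a n = (a (n - 1))^2 / (a (n - 2) * a n)"

definition power_series_fun :: "(nat \<Rightarrow> real) \<Rightarrow> complex \<Rightarrow> complex" where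
  "power_series_fun a z = (\<Sum>k. complex_of_real (a k) * z ^ k)"

end

theory Submission
  imports Defs "HOL-Complex_Analysis.Complex_Analysis"
begin

lemma finite_zeros_cball:
  fixes G :: "complex \<Rightarrow> complex"
  assumes "G holomorphic_on UNIV" "G z0 \<noteq> 0"
  shows "finite {p. norm p \<le> R \<and> G p = 0}"
proof (cases "G constant_on UNIV")
  case True
  then obtain c where "\<And>x. G x = c" by (auto simp: constant_on_def)
  with assms have "{p. norm p \<le> R \<and> G p = 0} = {}" by auto
  then show ?thesis by (metis finite.emptyI)
next
  case False
  have "finite {z\<in>cball 0 R. G z = 0}"
    by (rule holomorphic_compact_finite_zeros[OF assms(1) open_UNIV connected_UNIV compact_cball subset_UNIV False])
  moreover have "{z\<in>cball 0 R. G z = 0} = {p. norm p \<le> R \<and> G p = 0}" by auto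
  ultimately show ?thesis by simp
qed

lemma zorder_monomial:
  fixes A :: complex
  assumes "A \<noteq> 0"
  shows "zorder (\<lambda>z. A * z ^ k) 0 = int k"
proof -
  have "zorder (\<lambda>z. A * z ^ k) 0 = int k"
    by (rule zorder_eqI[of UNIV 0 "\<lambda>_. A"]) (use assms in \<open>auto simp: power_int_def\<close>)
  then show ?thesis .
qed


lemma winding_circle_cases:
  assumes "r > 0" "norm p \<noteq> r"
  shows "winding_number (circlepath 0 r) p = (if norm p < r then 1 else 0)"
proof (cases "norm p < r")
  case True
  then show ?thesis using winding_number_circlepath[of p 0 r] by simp
next
  case False
  with assms have "norm p > r" by simp
  then have "winding_number (circlepath 0 r) p = 0"
    by (intro winding_number_zero_outside[of _ "cball 0 r"]) (use assms in \<open>auto simp: valid_path_imp_path\<close>)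
  with False show ?thesis by simp
qed

lemma rouche_count:
  fixes F :: "complex \<Rightarrow> complex" and A :: complex
  assumes holo: "F holomorphic_on UNIV" and A: "A \<noteq> 0" and r: "r > 0"
    and pos: "\<And>z. norm z = r \<Longrightarrow> Re (F z * cnj (A * z ^ k)) > 0"
  shows "finite {p. norm p < r \<and> F p = 0}"
    and "(\<Sum>p\<in>{p. norm p < r \<and> F p = 0}. zorder F p) = int k"
proof -
  define h where "h = (\<lambda>z::complex. A * z ^ k)"
  define f where "f = (\<lambda>z. (F z + h z) / 2)"
  define g where "g = (\<lambda>z. (F z - h z) / 2)"
  define s where "s = ball (0::complex) (r + 1)"
  have hholo: "h holomorphic_on UNIV" unfolding h_def by (intro holomorphic_intros)
  have fholo: "f holomorphic_on UNIV" unfolding f_def using holo hholo by (intro holomorphic_intros) auto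
  have gholo: "g holomorphic_on UNIV" unfolding g_def using holo hholo by (intro holomorphic_intros) auto
  have key: "cmod (f z) > cmod (g z)" if "norm z = r" for z
  proof -
    have "Re (F z * cnj (h z)) > 0" using pos[OF that] by (simp add: h_def)
    have "(cmod (F z + h z))^2 - (cmod (F z - h z))^2 = 4 * Re (F z * cnj (h z))"
      unfolding cmod_power2 by (simp add: algebra_simps power2_eq_square)
    then have "(cmod (F z - h z))^2 < (cmod (F z + h z))^2" using \<open>Re (F z * cnj (h z)) > 0\<close> by linarith
    then have "cmod (F z - h z) < cmod (F z + h z)"
      using power2_less_imp_less by fastforce
    then show ?thesis by (simp add: f_def g_def norm_divide)
  qed
  define z0 :: complex where "z0 = of_real r"
  have z0: "norm z0 = r" using r by (simp add: z0_def)
  have Fz0: "F z0 \<noteq> 0" using pos[OF z0] by auto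
  have fz0: "f z0 \<noteq> 0" using key[OF z0] by auto
  have hz0: "h z0 \<noteq> 0" using A z0 r by (auto simp: h_def)
  have fin: "finite {p. norm p \<le> r + 1 \<and> G p = 0}" if "G holomorphic_on UNIV" "G z0 \<noteq> 0" for G
    by (rule finite_zeros_cball[OF that])
  have sub: "{p\<in>s. G p = 0} \<subseteq> {p. norm p \<le> r + 1 \<and> G p = 0}" for G
    by (auto simp: s_def)
  have finF: "finite {p\<in>s. F p = 0}" by (rule finite_subset[OF sub fin[OF holo Fz0]])
  have finf: "finite {p\<in>s. f p = 0}" by (rule finite_subset[OF sub fin[OF fholo fz0]])
  have finh: "finite {p\<in>s. h p = 0}" by (rule finite_subset[OF sub fin[OF hholo hz0]])
  have img: "path_image (circlepath 0 r) \<subseteq> s" using r by (auto simp: s_def)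
  have homo: "\<forall>z. z \<notin> s \<longrightarrow> winding_number (circlepath 0 r) z = 0"
    using r by (auto simp: s_def intro!: winding_number_zero_outside[of _ "cball 0 r"] valid_path_imp_path)
  have fg: "(\<lambda>p. f p + g p) = F" by (auto simp: f_def g_def field_simps)
  have fmg: "(\<lambda>p. f p + (- g) p) = h" by (auto simp: f_def g_def field_simps)
  have R1: "(\<Sum>p\<in>{p\<in>s. F p = 0}. winding_number (circlepath 0 r) p * zorder F p)
          = (\<Sum>p\<in>{p\<in>s. f p = 0}. winding_number (circlepath 0 r) p * zorder f p)"
  proof -
    have fg': "\<And>p. f p + g p = F p" using fg by metis
    have "(\<Sum>p\<in>{p\<in>s. f p + g p = 0}. winding_number (circlepath 0 r) p * zorder (\<lambda>p. f p + g p) p)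
          = (\<Sum>p\<in>{p\<in>s. f p = 0}. winding_number (circlepath 0 r) p * zorder f p)"
      by (rule Rouche_theorem) 
         (use finF finf fholo gholo img homo key r in \<open>auto simp: s_def fg' intro: holomorphic_on_subset\<close>)
    then show ?thesis by (simp only: fg fg')
  qed
  have R2: "(\<Sum>p\<in>{p\<in>s. h p = 0}. winding_number (circlepath 0 r) p * zorder h p)
          = (\<Sum>p\<in>{p\<in>s. f p = 0}. winding_number (circlepath 0 r) p * zorder f p)"
  proof -
    have fg': "\<And>p. f p + (-g) p = h p" using fmg by metis
    have e: "{p\<in>s. f p + (-g) p = 0} = {p\<in>s. h p = 0}" using fg' by auto
    have "(\<Sum>p\<in>{p\<in>s. f p + (-g) p = 0}. winding_number (circlepath 0 r) p * zorder (\<lambda>p. f p + (-g) p) p)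
          = (\<Sum>p\<in>{p\<in>s. f p = 0}. winding_number (circlepath 0 r) p * zorder f p)"
      by (rule Rouche_theorem) 
         (use finh[folded e] finf fholo gholo img homo key r in \<open>auto simp: s_def intro: holomorphic_on_subset intro!: holomorphic_intros\<close>)
    then show ?thesis by (simp only: fmg fg')
  qed
  have Fnz: "F p \<noteq> 0" if "norm p = r" for p using pos[OF that] by auto
  have eqset: "{p\<in>{p\<in>s. F p = 0}. norm p < r} = {p. norm p < r \<and> F p = 0}" by (auto simp: s_def)
  show finres: "finite {p. norm p < r \<and> F p = 0}"
    by (rule finite_subset[OF _ finF]) (auto simp: s_def)
  have S1: "(\<Sum>p\<in>{p\<in>s. F p = 0}. winding_number (circlepath 0 r) p * zorder F p)
      = (\<Sum>p\<in>{p\<in>s. F p = 0}. if norm p < r then complex_of_int (zorder F p) else 0)"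
  proof (rule sum.cong[OF refl])
    fix p assume "p \<in> {p\<in>s. F p = 0}"
    then have "norm p \<noteq> r" using Fnz by auto
    then show "winding_number (circlepath 0 r) p * complex_of_int (zorder F p) = (if norm p < r then complex_of_int (zorder F p) else 0)"
      using winding_circle_cases[OF r, of p] by auto
  qed
  also have "\<dots> = (\<Sum>p\<in>{p\<in>{p\<in>s. F p = 0}. norm p < r}. complex_of_int (zorder F p))"
    by (rule sum.inter_filter[OF finF, symmetric])
  also have "\<dots> = complex_of_int (\<Sum>p\<in>{p. norm p < r \<and> F p = 0}. zorder F p)"
    unfolding eqset by simp
  finally have S1': "(\<Sum>p\<in>{p\<in>s. F p = 0}. winding_number (circlepath 0 r) p * zorder F p) = complex_of_int (\<Sum>p\<in>{p. norm p < r \<and> F p = 0}. zorder F p)" .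
  have S2: "(\<Sum>p\<in>{p\<in>s. h p = 0}. winding_number (circlepath 0 r) p * zorder h p) = of_nat k"
  proof (cases "k = 0")
    case True
    then have "{p\<in>s. h p = 0} = {}" using A by (auto simp: h_def)
    then show ?thesis using True by (metis of_nat_0 sum.empty)
  next
    case False
    then have "{p\<in>s. h p = 0} = {0}" using A r by (auto simp: h_def s_def)
    moreover have "zorder h 0 = int k" unfolding h_def by (rule zorder_monomial[OF A])
    ultimately show ?thesis using winding_number_circlepath_centre[OF r, of 0] by simp
  qed
  have "complex_of_int (\<Sum>p\<in>{p. norm p < r \<and> F p = 0}. zorder F p) = complex_of_int (int k)"
    using S1' S2 R1 R2 by simp
  then show "(\<Sum>p\<in>{p. norm p < r \<and> F p = 0}. zorder F p) = int k"
    using of_int_eq_iff by blast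
qed
lemma zorder_pos_entire:
  fixes F :: "complex \<Rightarrow> complex"
  assumes "F holomorphic_on UNIV" "F z0 \<noteq> 0" "F z = 0"
  shows "zorder F z > 0"
  using zorder_exist_zero[OF assms(1) open_UNIV connected_UNIV, of z] assms by auto

lemma zorder1_deriv:
  fixes F :: "complex \<Rightarrow> complex"
  assumes holo: "F holomorphic_on UNIV" and nz: "F z0 \<noteq> 0" and "zorder F z = 1"
  shows "deriv F z \<noteq> 0"
proof -
  obtain r where r: "r > 0" and gh: "zor_poly F z holomorphic_on cball z r"
    and fac: "\<forall>w\<in>cball z r. F w = zor_poly F z w * (w - z) ^ nat (zorder F z) \<and> zor_poly F z w \<noteq> 0"
    using zorder_exist_zero[OF holo open_UNIV connected_UNIV, of z] nz by auto
  define g where "g = zor_poly F z"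
  have fac1: "\<forall>w\<in>cball z r. F w = g w * (w - z)" using fac assms(3) by (simp add: g_def)
  have gz: "g z \<noteq> 0" using fac r by (simp add: g_def)
  have "g holomorphic_on ball z r" using gh by (auto simp: g_def intro: holomorphic_on_subset)
  then have "g field_differentiable at z" using r
    by (meson centre_in_ball holomorphic_on_imp_differentiable_at open_ball)
  then obtain g' where g': "(g has_field_derivative g') (at z)"
    using field_differentiable_def by blast
  have d: "((\<lambda>w. g w * (w - z)) has_field_derivative g z) (at z)"
  proof -
    have "((\<lambda>w. w - z) has_field_derivative 1) (at z)" by (auto intro!: derivative_eq_intros)
    from DERIV_mult[OF g' this] show ?thesis by simp
  qed
  have ev: "eventually (\<lambda>w. F w = g w * (w - z)) (nhds z)"
  proof -
    have "eventually (\<lambda>w. w \<in> ball z r) (nhds z)" using r by (intro eventually_nhds_in_open) auto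
    then show ?thesis by eventually_elim (use fac1 in auto)
  qed
  have "(F has_field_derivative g z) (at z)"
    using d DERIV_cong_ev[OF refl ev refl] by blast
  then have "deriv F z = g z" by (rule DERIV_imp_deriv)
  with gz show ?thesis by simp
qed


lemma x_le_p:
  fixes x :: real
  assumes "x > 0" "x^3 \<le> 1/4"
  shows "x \<le> 63/100"
proof (rule ccontr)
  assume "\<not> x \<le> 63/100"
  then have "(63/100::real)^3 < x^3" by (intro power_strict_mono) auto
  with assms show False by (simp add: power_divide)
qed

lemma tail_num:
  fixes x :: real
  assumes "x > 0" "x^3 \<le> 1/4"
  shows "x^16/(1-x^7) + (x^3/16)*(x/16)/(1 - x/16) \<le> 14/10000"
proof -
  have xp: "x \<le> 63/100" using x_le_p assms by blast
  have x7: "x^7 \<le> (63/100)^7" using xp assms by (intro power_mono) auto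
  have x7': "x^7 \<le> 1/25" using x7 by (simp add: power_divide)
  have x16: "x^16 \<le> (1/4)^5 * (63/100)"
  proof -
    have "x^16 = (x^3)^5 * x" by (simp add: power_mult[symmetric] power_Suc2[symmetric])
    also have "\<dots> \<le> (1/4)^5 * (63/100)" using assms xp
      by (intro mult_mono power_mono) auto
    finally show ?thesis .
  qed
  have t1: "x^16/(1-x^7) \<le> ((1/4)^5 * (63/100)) / (24/25)"
    using x16 x7' by (intro frac_le) auto
  have x4: "x^3 * x \<le> (1/4) * (63/100)" using assms xp by (intro mult_mono) auto
  have t2: "(x^3/16)*(x/16)/(1 - x/16) \<le> ((1/4) * (63/100) / 256) / (24/25)"
  proof -
    have "(x^3/16)*(x/16) = (x^3 * x)/256" by simp
    then show ?thesis using x4 xp assms by (simp only:) (intro frac_le, auto)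
  qed
  have n1: "((1/4)^5 * (63/100)) / (24/25) \<le> (7/10000::real)" by (simp add: power_divide)
  have n2: "((1/4) * (63/100) / 256) / (24/25) \<le> (7/10000::real)" by simp
  have "x^16/(1-x^7) + (x^3/16)*(x/16)/(1 - x/16) \<le> 7/10000 + 7/10000"
    by (rule add_mono[OF order_trans[OF t1 n1] order_trans[OF t2 n2]])
  then show ?thesis by simp
qed

lemma g_mono_num:
  fixes x a :: real
  assumes "x > 0" "x^3 \<le> 1/4" "a \<ge> 0" "a \<le> 2" "4 * a * (63/100)^3 \<le> 2"
  shows "1 - 2*x + a*x^4 \<ge> 1 - 2*(63/100) + a*(63/100)^4"
proof -
  define p :: real where "p = 63/100"
  have xp: "x \<le> p" using x_le_p assms p_def by blast
  have "p^3 + p^2*x + p*x^2 + x^3 \<le> 4 * p^3"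
  proof -
    have "p^2 * x \<le> p^2 * p" using xp by (intro mult_left_mono) auto
    moreover have "p * x^2 \<le> p * p^2" using xp assms by (intro mult_left_mono power_mono) (auto simp: p_def)
    moreover have "x^3 \<le> p^3" using xp assms by (intro power_mono) auto
    ultimately show ?thesis by (simp add: power2_eq_square power3_eq_cube)
  qed
  then have "a * (p^3 + p^2*x + p*x^2 + x^3) \<le> a * (4*p^3)" using assms by (intro mult_left_mono) auto
  then have "2 - a * (p^3 + p^2*x + p*x^2 + x^3) \<ge> 0" using assms by (simp add: p_def)
  then have "(p - x) * (2 - a * (p^3 + p^2*x + p*x^2 + x^3)) \<ge> 0" using xp by simp
  moreover have "(p - x) * (2 - a * (p^3 + p^2*x + p*x^2 + x^3)) = (1 - 2*x + a*x^4) - (1 - 2*p + a*p^4)"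
    by (simp add: algebra_simps power2_eq_square power3_eq_cube power4_eq_xxxx)
  ultimately show ?thesis by (simp add: p_def)
qed

lemma caseB_num:
  fixes x d2 d3 T :: real
  assumes "x > 0" "x^3 \<le> 1/4" "d2 \<ge> (41/21) * x^4" "d3 \<le> (1 + (21/20)^3) * x^9"
    "T \<le> 14/10000"
  shows "1 - 2*x + d2 - d3 - T > 0"
proof -
  have g: "1 - 2*x + (41/21)*x^4 \<ge> 1 - 2*(63/100) + (41/21)*(63/100)^4"
    by (rule g_mono_num) (use assms in \<open>auto simp: power_divide\<close>)
  have "x^9 = (x^3)^3" by (simp add: power_mult[symmetric])
  also have "\<dots> \<le> (1/4)^3" using assms by (intro power_mono) auto
  finally have x9: "x^9 \<le> 1/64" by (simp add: power_divide)
  have "(1 + (21/20)^3) * x^9 \<le> (1 + (21/20)^3) * (1/64::real)" by (rule mult_left_mono[OF x9]) simp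
  then have "d3 \<le> (1 + (21/20)^3) * (1/64)" using assms(4) by linarith
  moreover have num: "1 - 2*(63/100) + (41/21)*(63/100)^4 - (1 + (21/20)^3)*(1/64) - 14/10000 > (0::real)"
    by (simp add: power_divide)
  ultimately show ?thesis using g assms(3,5) by linarith
qed

lemma caseA_num:
  fixes x d2 d3 T :: real
  assumes "x > 0" "x \<le> 1/4" "d2 \<ge> 0" "d3 \<le> x^9 + x^3/16" "T \<le> 14/10000"
  shows "1 - 2*x + d2 - d3 - T > 0"
proof -
  have "x^9 \<le> x^1" using assms by (intro power_decreasing) auto
  moreover have "x^3 \<le> x^1" using assms by (intro power_decreasing) auto
  ultimately show ?thesis using assms by simp
qed


lemma c0_cube: "(2 * root 3 2 :: real)^3 = 16"
proof -
  have "(root 3 2 :: real)^3 = 2" by (simp add: real_root_pow_pos2)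
  then show ?thesis by (simp add: power_mult_distrib)
qed

lemma c0_ge: "(2 * root 3 2 :: real) \<ge> 5/2"
proof (rule ccontr)
  assume "\<not> ?thesis"
  then have "2 * root 3 2 < (5/2::real)" by simp
  then have "(2 * root 3 2)^3 < (5/2::real)^3" by (intro power_strict_mono) auto
  then show False using c0_cube by (simp add: power_divide)
qed

lemma cubic_lb:
  fixes t d1 d2 d3 :: real
  assumes "-1 \<le> t" "t \<le> 1" "d1 \<ge> 4*d2" "d2 \<ge> 0" "d3 \<ge> 0"
  shows "1 + d1*t + d2*(2*t^2-1) + d3*(4*t^3-3*t) \<ge> 1 - d1 + d2 - d3"
proof -
  have "1 + d1*t + d2*(2*t^2-1) + d3*(4*t^3-3*t) - (1 - d1 + d2 - d3)
      = (t+1)*(d1 + 2*d2*(t-1)) + d3*((t+1)*(2*t-1)^2)"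
    by (simp add: algebra_simps power2_eq_square power3_eq_cube)
  moreover have "(t+1)*(d1 + 2*d2*(t-1)) \<ge> 0"
  proof -
    have "d1 + 2*d2*(t-1) \<ge> d1 + 2*d2*(-2)" using assms by (intro add_left_mono mult_left_mono) auto
    then show ?thesis using assms by simp
  qed
  moreover have "d3*((t+1)*(2*t-1)^2) \<ge> 0" using assms by simp
  ultimately show ?thesis by linarith
qed


lemma lower_tail:
  fixes f :: "nat \<Rightarrow> real"
  assumes "\<And>j. j < n \<Longrightarrow> f j \<le> \<rho> * f (j+1)" "\<And>j. f j \<ge> 0" "0 \<le> \<rho>" "\<rho> < 1"
  shows "(\<Sum>j<n. f j) \<le> f n * \<rho> / (1 - \<rho>)"
  using assms(1)
proof (induction n)
  case 0 then show ?case using assms by simp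
next
  case (Suc n)
  have "(\<Sum>j<Suc n. f j) = (\<Sum>j<n. f j) + f n" by simp
  also have "\<dots> \<le> f n * \<rho> / (1 - \<rho>) + f n" using Suc by simp
  also have "\<dots> = f n / (1 - \<rho>)" using assms by (simp add: field_simps)
  also have "\<dots> \<le> (\<rho> * f (Suc n)) / (1 - \<rho>)" using Suc.prems[of n] assms by (intro divide_right_mono) auto
  finally show ?case by (simp add: mult.commute)
qed

lemma upper_tail:
  fixes f :: "nat \<Rightarrow> real"
  assumes "\<And>i. f (i+1) \<le> \<sigma> * f i" "\<And>j. f j \<ge> 0" "0 \<le> \<sigma>" "\<sigma> < 1"
  shows "summable (\<lambda>i. f (i+1)) \<and> (\<Sum>i. f (i+1)) \<le> f 0 * \<sigma> / (1 - \<sigma>)"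
proof -
  have b: "f (i+1) \<le> f 0 * \<sigma>^(i+1)" for i
  proof (induction i)
    case 0 then show ?case using assms(1)[of 0] by (simp add: mult.commute)
  next
    case (Suc i)
    have "f (Suc i + 1) \<le> \<sigma> * f (i+1)" using assms(1)[of "i+1"] by simp
    also have "\<dots> \<le> \<sigma> * (f 0 * \<sigma>^(i+1))" using Suc assms by (intro mult_left_mono) auto
    finally show ?case by (simp add: algebra_simps)
  qed
  have g: "(\<lambda>i. f 0 * \<sigma>^(i+1)) sums (f 0 * (\<sigma> * (1 / (1 - \<sigma>))))"
  proof -
    have "(\<lambda>i. \<sigma>^i) sums (1 / (1 - \<sigma>))" using geometric_sums[of \<sigma>] assms by simp
    then have "(\<lambda>i. (f 0 * \<sigma>) * \<sigma>^i) sums ((f 0 * \<sigma>) * (1 / (1 - \<sigma>)))" by (rule sums_mult)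
    then show ?thesis by (simp add: power_Suc algebra_simps)
  qed
  have s: "summable (\<lambda>i. f (i+1))"
    by (rule summable_comparison_test[OF _ sums_summable[OF g]]) (use b assms in auto)
  have "(\<Sum>i. f (i+1)) \<le> (\<Sum>i. f 0 * \<sigma>^(i+1))"
    by (rule suminf_le[OF b s sums_summable[OF g]])
  also have "\<dots> = f 0 * \<sigma> / (1 - \<sigma>)" using sums_unique[OF g] by simp
  finally show ?thesis using s by simp
qed

lemma sum7: "sum (f::nat\<Rightarrow>real) {..<m+7} = sum f {..<m} + (f m + f (m+1) + f (m+2) + f (m+3) + f (m+4) + f (m+5) + f (m+6))"
  by (simp add: numeral_eq_Suc add_Suc_right)


context
  fixes a :: "nat \<Rightarrow> real"
  assumes pos: "\<And>k. a k > 0"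
    and Qc: "\<And>n. n \<ge> 2 \<Longrightarrow> second_quotient a n \<ge> 2 * root 3 2"
    and Qmono: "\<And>m n. 2 \<le> m \<Longrightarrow> m \<le> n \<Longrightarrow> second_quotient a m \<le> second_quotient a n"
begin

abbreviation "Q \<equiv> second_quotient a"
definition lam :: "real \<Rightarrow> nat \<Rightarrow> real" where "lam r j = r * a (j+1) / a j"
definition ee :: "real \<Rightarrow> nat \<Rightarrow> nat \<Rightarrow> real" where "ee r k j = a j * r^j / (a k * r^k)"

lemma Qpos: "n \<ge> 2 \<Longrightarrow> Q n > 0"
  using Qc[of n] c0_ge by linarith

lemma Qge1: "n \<ge> 2 \<Longrightarrow> Q n \<ge> 1"
  using Qc[of n] c0_ge by linarith

lemma lam_step: "lam r (j+1) = lam r j / Q (j+2)"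
  using pos[of j] pos[of "j+1"] pos[of "j+2"]
  by (simp add: lam_def second_quotient_def field_simps power2_eq_square)

lemma lam_pos: "r > 0 \<Longrightarrow> lam r j > 0"
  using pos by (simp add: lam_def)

lemma ee_step: "r > 0 \<Longrightarrow> ee r k (j+1) = ee r k j * lam r j"
  using pos[of j] pos[of k] by (simp add: ee_def lam_def field_simps)

lemma ee_pos: "r > 0 \<Longrightarrow> ee r k j > 0"
  using pos by (simp add: ee_def)

lemma ee_self: "r > 0 \<Longrightarrow> ee r k k = 1"
  using pos[of k] by (simp add: ee_def)

lemma lam_decr: "r > 0 \<Longrightarrow> i \<le> j \<Longrightarrow> lam r j \<le> lam r i"
proof (induction j)
  case 0 then show ?case by simp
next
  case (Suc j)
  show ?case
  proof (cases "i = Suc j")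
    case True then show ?thesis by simp
  next
    case False
    then have "i \<le> j" using Suc by simp
    have "lam r (Suc j) = lam r j / Q (j+2)" using lam_step[of r j] by simp
    also have "\<dots> \<le> lam r j"
    proof -
      have q: "Q (j+2) \<ge> 1" using Qge1[of "j+2"] by simp
      have l: "lam r j > 0" using lam_pos[OF Suc.prems(1), of j] .
      have "lam r j * 1 \<le> lam r j * Q (j+2)" using q l by (intro mult_left_mono) auto
      then show ?thesis using q by (simp add: divide_le_eq)
    qed
    finally show ?thesis using Suc.IH[OF Suc.prems(1) \<open>i \<le> j\<close>] by simp
  qed
qed

lemma x_facts:
  fixes m :: nat and r :: real
  assumes m2: "m \<ge> 2" and r: "r > 0" and r2: "r^2 = a(m+2)/a(m+4)"
  defines "x \<equiv> lam r (m+3)"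
  shows "x > 0" "lam r (m+2) = 1 / x" "x^2 * Q (m+4) = 1"
proof -
  show xp: "x > 0" using lam_pos[OF r] by (simp add: x_def)
  have i: "m+2+1 = m+3" "m+3+1 = m+4" by simp_all
  have "lam r (m+2) * x = r^2 * a (m+4) / a (m+2)"
    using pos[of "m+2"] pos[of "m+3"] unfolding x_def lam_def i by (simp add: field_simps power2_eq_square)
  also have "\<dots> = 1" using r2 pos[of "m+2"] pos[of "m+4"] by simp
  finally have l: "lam r (m+2) * x = 1" .
  then show l2: "lam r (m+2) = 1 / x" using xp by (simp add: field_simps)
  have i2: "m+2+2 = m+4" by simp
  have "x = lam r (m+2) / Q (m+4)" using lam_step[of r "m+2"] unfolding x_def i i2 .
  then have "x * Q (m+4) = lam r (m+2)" using Qpos[of "m+4"] by simp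
  then have "x * Q (m+4) = 1 / x" using l2 by simp
  then have "x * (x * Q (m+4)) = x * (1/x)" by simp
  then show "x^2 * Q (m+4) = 1" using xp by (simp add: power2_eq_square mult.assoc)
qed

lemma main_est:
  fixes m :: nat and r t :: real and T :: "nat \<Rightarrow> real"
  assumes m2: "m \<ge> 2" and r: "r > 0" and r2: "r^2 = a(m+2)/a(m+4)"
    and good: "Q (m+4) \<ge> 16 \<or> (Q (m+5) \<le> 21/20 * Q (m+4) \<and> 21/20 * Q (m+2) \<ge> Q (m+4))"
    and summ: "summable (\<lambda>j. a j * r^j)"
    and t: "-1 \<le> t" "t \<le> 1"
    and Tb: "\<And>j. \<bar>T j\<bar> \<le> ee r (m+3) j"
    and T0: "T (m+3) = 1"
    and T1: "T (m+4) = ee r (m+3) (m+4) * t" "T (m+2) = ee r (m+3) (m+2) * t"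
    and T2: "T (m+5) = ee r (m+3) (m+5) * (2*t^2-1)" "T (m+1) = ee r (m+3) (m+1) * (2*t^2-1)"
    and T3: "T (m+6) = ee r (m+3) (m+6) * (4*t^3-3*t)" "T m = ee r (m+3) m * (4*t^3-3*t)"
  shows "summable T \<and> suminf T > 0"
proof -
  define x where "x = lam r (m+3)"
  define e where "e = ee r (m+3)"
  define c0 :: real where "c0 = 2 * root 3 2"
  have c0: "c0^3 = 16" "c0 \<ge> 5/2" using c0_cube c0_ge by (auto simp: c0_def)
  have xp: "x > 0" and l2: "lam r (m+2) = 1 / x" and xu: "x^2 * Q (m+4) = 1"
    using x_facts[OF m2 r r2] by (auto simp: x_def)
  have Qg: "Q n \<ge> c0" if "n \<ge> 2" for n using Qc[OF that] by (simp add: c0_def)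
  have Qm: "Q i \<le> Q j" if "2 \<le> i" "i \<le> j" for i j using Qmono[OF that] .
  have ep: "e j > 0" for j using ee_pos[OF r] by (simp add: e_def)
  have es: "e (j+1) = e j * lam r j" for j using ee_step[OF r] by (simp add: e_def)
  have e3: "e (m+3) = 1" using ee_self[OF r] by (simp add: e_def)
  have ls: "lam r (j+1) = lam r j / Q (j+2)" for j by (rule lam_step)
  define u where "u = Q (m+4)"
  have up: "u > 0" using Qpos[of "m+4"] by (simp add: u_def)
  have i: "m+3+1 = m+4" "m+4+1 = m+5" "m+5+1 = m+6" "m+6+1 = m+7" "m+2+1 = m+3" "m+1+1 = m+2"
          "m+3+2 = m+5" "m+4+2 = m+6" "m+5+2 = m+7" "m+2+2 = m+4" "m+1+2 = m+3" by simp_all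
  have e4: "e (m+4) = x" using es[of "m+3", unfolded i] e3 by (simp add: x_def)
  have l4: "lam r (m+4) = x / Q (m+5)" using ls[of "m+3", unfolded i] by (simp add: x_def)
  have l5: "lam r (m+5) = x / (Q (m+5) * Q (m+6))" using ls[of "m+4", unfolded i] l4 by (simp add:)
  have l6: "lam r (m+6) = x / (Q (m+5) * Q (m+6) * Q (m+7))" using ls[of "m+5", unfolded i] l5 by (simp add:)
  have e5: "e (m+5) = x^2 / Q (m+5)" using es[of "m+4", unfolded i] e4 l4 by (simp add: power2_eq_square)
  have e6: "e (m+6) = x^3 / (Q (m+5)^2 * Q (m+6))" using es[of "m+5", unfolded i] e5 l5
    by (simp add: power2_eq_square power3_eq_cube)
  have "e (m+3) = e (m+2) * lam r (m+2)" by (rule es[of "m+2", unfolded i])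
  then have "1 = e (m+2) * (1 / x)" by (simp only: e3 l2)
  then have e2: "e (m+2) = x" using xp by (simp add: divide_eq_eq)
  have q3: "Q (m+3) > 0" "Q (m+2) > 0" "Q (m+1) > 0" using Qpos m2 by auto
  have "lam r (m+2) = lam r (m+1) / Q (m+3)" by (rule ls[of "m+1", unfolded i])
  then have "1 / x = lam r (m+1) / Q (m+3)" by (simp only: l2)
  then have l1: "lam r (m+1) = Q (m+3) / x" using q3 xp by (simp add: divide_eq_eq eq_divide_eq)
  have "lam r (m+1) = lam r m / Q (m+2)" by (rule ls[of m, unfolded i])
  then have "Q (m+3) / x = lam r m / Q (m+2)" by (simp only: l1)
  then have l0: "lam r m = Q (m+2) * Q (m+3) / x" using q3 xp by (simp add: divide_eq_eq eq_divide_eq) (simp add: mult.commute)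
  have "e (m+2) = e (m+1) * lam r (m+1)" by (rule es[of "m+1", unfolded i])
  then have "x = e (m+1) * (Q (m+3) / x)" by (simp only: e2 l1)
  then have e1: "e (m+1) = x^2 / Q (m+3)" using xp q3 by (simp add: eq_divide_eq power2_eq_square divide_eq_eq)
  have "e (m+1) = e m * lam r m" by (rule es[of m, unfolded i])
  then have "x^2 / Q (m+3) = e m * (Q (m+2) * Q (m+3) / x)" by (simp only: e1 l0)
  then have e0: "e m = x^3 / (Q (m+3)^2 * Q (m+2))" using xp q3
    by (simp add: eq_divide_eq power2_eq_square power3_eq_cube divide_eq_eq)
  have Q12: "Q (m+1) \<le> Q (m+2)" "Q (m+2) \<le> Q (m+3)" "Q (m+3) \<le> u" "u \<le> Q (m+5)"
     "Q (m+5) \<le> Q (m+6)" "Q (m+6) \<le> Q (m+7)" using Qm m2 by (auto simp: u_def)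
  have Qc0: "Q (m+1) \<ge> c0" using Qg m2 by auto
  have c0p: "c0 > 0" using c0 by simp
  have xu': "x^2 = 1 / u" using xu up by (simp add: u_def field_simps)
  have uc: "u \<ge> c0" using Q12 Qc0 by linarith
  have u3: "u^3 \<ge> 16" using power_mono[OF uc, of 3] c0 by simp
  have x6: "(x^3)^2 \<le> (1/4)^2"
  proof -
    have "(x^3)^2 = (x^2)^3" by (simp add: power_mult[symmetric] mult.commute)
    also have "\<dots> = 1 / u^3" using xu' by (simp add: power_divide)
    also have "\<dots> \<le> 1 / 16" using u3 up by (intro divide_left_mono) auto
    finally show ?thesis by (simp add: power_divide)
  qed
  have x3: "x^3 \<le> 1/4" using power2_le_imp_le[OF x6] by simp
  have x2c: "x^2 \<le> 1 / c0" using xu' uc up c0p by (simp add: frac_le)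
  have e5b: "e (m+5) \<le> x^4"
  proof -
    have "x^2 / Q (m+5) \<le> x^2 / u" using Q12 up by (intro divide_left_mono) auto
    also have "x^2 / u = x^4" using xu' by (simp add: power4_eq_xxxx power2_eq_square)
    finally show ?thesis using e5 by simp
  qed
  have e1b: "e (m+1) \<le> x^2 / c0"
    using e1 Q12 uc Qc0 c0p by (simp add: frac_le)
  have d14: "2*x \<ge> 4 * (e (m+5) + e (m+1))"
  proof -
    have x3c: "x^3 \<le> x / c0"
    proof -
      have "x^3 = x * x^2" by (simp add: power3_eq_cube power2_eq_square)
      also have "\<dots> \<le> x * (1/c0)" using x2c xp by (intro mult_left_mono) auto
      finally show ?thesis by simp
    qed
    have "(4*x/c0)^2 = 16 * x^2 / c0^2" by (simp add: power_divide power_mult_distrib)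
    also have "\<dots> \<le> 16 * (1/c0) / c0^2" using x2c c0p by (intro divide_right_mono mult_left_mono) auto
    also have "\<dots> = 16 / c0^3" by (simp add: power2_eq_square power3_eq_cube)
    also have "\<dots> = 1" using c0 by simp
    finally have "(4*x/c0)^2 \<le> 1^2" by simp
    then have q: "4*x/c0 \<le> 1" by (rule power2_le_imp_le) simp
    have "4 * (e (m+5) + e (m+1)) \<le> 4 * (x^4 + x^2/c0)" using e5b e1b by simp
    also have "x^4 = x * x^3" by (simp add: power4_eq_xxxx power3_eq_cube)
    also have "x^2/c0 = x * (x/c0)" by (simp add: power2_eq_square)
    also have "4 * (x * x^3 + x * (x/c0)) = 2*x * (2*x^3 + 2*(x/c0))" by (simp add: algebra_simps)
    also have "\<dots> \<le> 2*x * 1"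
    proof (rule mult_left_mono)
      have "4*(x/c0) = 4*x/c0" by simp
      then show "2*x^3 + 2*(x/c0) \<le> 1" using x3c q by linarith
    qed (use xp in auto)
    finally show ?thesis by simp
  qed
  have u3x: "1 / u^3 = x^6"
  proof -
    have "x^6 = (x^2)^3" by (simp add: power_mult[symmetric])
    also have "\<dots> = 1 / u^3" using xu' by (simp add: power_divide)
    finally show ?thesis by simp
  qed
  have e6b: "e (m+6) \<le> x^9"
  proof -
    have "Q (m+5)^2 * Q (m+6) \<ge> u^2 * u" using Q12 up
      by (intro mult_mono power_mono) auto
    then have "x^3 / (Q (m+5)^2 * Q (m+6)) \<le> x^3 / (u^2 * u)" using up xp Qpos[of "m+5"] Qpos[of "m+6"]
      by (intro divide_left_mono) auto
    also have "x^3 / (u^2 * u) = x^3 * (1/u^3)" by (simp add: power2_eq_square power3_eq_cube)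
    also have "\<dots> = x^9" using u3x by (simp add: power_add[symmetric])
    finally show ?thesis using e6 by simp
  qed
  have c016: "Q (m+3)^2 * Q (m+2) \<ge> 16"
  proof -
    have "Q (m+3)^2 * Q (m+2) \<ge> c0^2 * c0" using Q12 Qc0 c0p
      by (intro mult_mono power_mono) auto
    then show ?thesis using c0 by (simp add: power2_eq_square power3_eq_cube)
  qed
  have e0b: "e m \<le> x^3 / 16"
  proof -
    have "x^3 / (Q (m+3)^2 * Q (m+2)) \<le> x^3 / 16" using c016 xp by (intro divide_left_mono) auto
    then show ?thesis using e0 by simp
  qed
  have xle: "x \<le> 63/100" using x_le_p[OF xp x3] .
  have lm1: "lam r (m-1) = Q (m+1) * Q (m+2) * Q (m+3) / x"
  proof -
    have i3: "m - 1 + 1 = m" "m - 1 + 2 = m + 1" using m2 by auto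
    have "lam r m = lam r (m-1) / Q (m+1)" using ls[of "m-1"] unfolding i3 .
    then show ?thesis using l0 q3 xp by (simp add: field_simps)
  qed
  have lm1b: "lam r (m-1) \<ge> 16 / x"
  proof -
    have "Q (m+1) * Q (m+2) * Q (m+3) \<ge> c0 * c0 * c0" using Q12 Qc0 c0p
      by (intro mult_mono) auto
    then have "Q (m+1) * Q (m+2) * Q (m+3) \<ge> 16" using c0 by (simp add: power3_eq_cube)
    then show ?thesis using lm1 xp by (simp add: divide_right_mono)
  qed
  have lowstep: "e j \<le> (x/16) * e (j+1)" if "j < m" for j
  proof -
    have "lam r j \<ge> lam r (m-1)" using lam_decr[OF r, of j "m-1"] that by simp
    then have "lam r j \<ge> 16 / x" using lm1b by linarith
    then have "e j * (16 / x) \<le> e j * lam r j" using ep[of j] by (intro mult_left_mono) auto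
    also have "\<dots> = e (j+1)" using es[of j] by simp
    finally have "e j * 16 \<le> x * e (j+1)" using xp by (simp add: field_simps)
    then show ?thesis by simp
  qed
  have low: "(\<Sum>j<m. e j) \<le> (x^3/16) * (x/16) / (1 - x/16)"
  proof -
    have "(\<Sum>j<m. e j) \<le> e m * (x/16) / (1 - x/16)"
      by (rule lower_tail) (use lowstep ep xp xle in \<open>auto simp: less_imp_le\<close>)
    also have "\<dots> \<le> (x^3/16) * (x/16) / (1 - x/16)"
      using e0b xp xle by (intro divide_right_mono mult_right_mono) auto
    finally show ?thesis .
  qed
  have x7: "x^7 < 1"
  proof -
    have "x^7 \<le> (63/100)^7" using xle xp by (intro power_mono) auto
    also have "\<dots> < 1" by (simp add: power_divide)
    finally show ?thesis .
  qed
  have l6b: "lam r (m+6) \<le> x^7"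
  proof -
    have "Q (m+5) * Q (m+6) * Q (m+7) \<ge> u * u * u" using Q12 up by (intro mult_mono) auto
    then have "x / (Q (m+5) * Q (m+6) * Q (m+7)) \<le> x / (u*u*u)" using xp up Qpos[of "m+5"] Qpos[of "m+6"] Qpos[of "m+7"]
      by (intro divide_left_mono) auto
    also have "x / (u*u*u) = x * (1/u^3)" by (simp add: power3_eq_cube)
    also have "\<dots> = x^7" using u3x by (simp add: power_Suc[symmetric] del: power_Suc)
    finally show ?thesis using l6 by simp
  qed
  have upstep: "e (i + (m+6) + 1) \<le> x^7 * e (i + (m+6))" for i
  proof -
    have "lam r (i + (m+6)) \<le> lam r (m+6)" using lam_decr[OF r, of "m+6" "i+(m+6)"] by simp
    then have "lam r (i + (m+6)) \<le> x^7" using l6b by linarith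
    then have "e (i+(m+6)) * lam r (i + (m+6)) \<le> e (i+(m+6)) * x^7" using ep by (intro mult_left_mono) (auto simp: less_imp_le)
    then show ?thesis using es[of "i+(m+6)"] by (simp add: mult.commute)
  qed
  have up_t: "summable (\<lambda>i. e (i+1 + (m+6))) \<and> (\<Sum>i. e (i+1 + (m+6))) \<le> e (0 + (m+6)) * x^7 / (1 - x^7)"
    using upper_tail[of "\<lambda>i. e (i + (m+6))" "x^7"] upstep ep x7 xp by (auto simp: less_imp_le ac_simps)
  have upb: "(\<Sum>i. e (i + (m+7))) \<le> x^16 / (1 - x^7)"
  proof -
    have "(\<lambda>i. e (i+1 + (m+6))) = (\<lambda>i. e (i + (m+7)))" by (simp add: ac_simps)
    then have "(\<Sum>i. e (i + (m+7))) \<le> e (m+6) * x^7 / (1 - x^7)" using up_t by simp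
    also have "\<dots> \<le> x^9 * x^7 / (1 - x^7)" using e6b x7 xp by (intro divide_right_mono mult_right_mono) auto
    also have "\<dots> = x^16 / (1 - x^7)" by (simp add: power_add[symmetric])
    finally show ?thesis .
  qed
  have ups: "summable (\<lambda>i. e (i + (m+7)))"
  proof -
    have "(\<lambda>i. e (i+1 + (m+6))) = (\<lambda>i. e (i + (m+7)))" by (simp add: ac_simps)
    then show ?thesis using up_t by simp
  qed
  have esum: "summable e"
  proof -
    have s: "summable (\<lambda>j. (a j * r^j) * (1 / (a (m+3) * r^(m+3))))" by (rule summable_mult2[OF summ])
    have eq: "ee r (m+3) = (\<lambda>j. (a j * r^j) * (1 / (a (m+3) * r^(m+3))))" by (rule ext) (simp add: ee_def)
    show ?thesis unfolding e_def eq by (rule s)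
  qed
  have Tb': "\<bar>T j\<bar> \<le> e j" for j using Tb[of j] by (simp add: e_def)
  have Tsum: "summable T"
    by (rule summable_comparison_test[OF _ esum]) (use Tb' in auto)
  have split: "suminf T = (\<Sum>i. T (i + (m+7))) + sum T {..<m+7}"
    using suminf_split_initial_segment[OF Tsum, of "m+7"] .
  have lo: "- e j \<le> T j" for j using Tb'[of j] by (simp add: abs_le_iff)
  have tailT: "(\<Sum>i. T (i + (m+7))) \<ge> - (\<Sum>i. e (i + (m+7)))"
  proof -
    have "(\<Sum>i. - e (i + (m+7))) \<le> (\<Sum>i. T (i + (m+7)))"
      by (rule suminf_le[OF _ summable_minus[OF ups] summable_ignore_initial_segment[OF Tsum]]) (rule lo)
    then show ?thesis using suminf_minus[OF ups] by simp
  qed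
  have lowT: "sum T {..<m} \<ge> - sum e {..<m}"
  proof -
    have "sum (\<lambda>j. - e j) {..<m} \<le> sum T {..<m}" by (rule sum_mono) (rule lo)
    then show ?thesis by (simp add: sum_negf)
  qed
  define d2 where "d2 = e (m+5) + e (m+1)"
  define d3 where "d3 = e (m+6) + e m"
  have block: "T m + T (m+1) + T (m+2) + T (m+3) + T (m+4) + T (m+5) + T (m+6)
      = 1 + (2*x)*t + d2*(2*t^2-1) + d3*(4*t^3-3*t)"
    using T0 T1 T2 T3 e4 e2 by (simp add: e_def[symmetric] d2_def d3_def algebra_simps)
  have blockb: "1 + (2*x)*t + d2*(2*t^2-1) + d3*(4*t^3-3*t) \<ge> 1 - 2*x + d2 - d3"
    by (rule cubic_lb) (use t d14 ep in \<open>auto simp: d2_def d3_def less_imp_le\<close>)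
  define TT where "TT = (\<Sum>i. e (i + (m+7))) + sum e {..<m}"
  have TTb: "TT \<le> 14/10000"
  proof -
    have "TT \<le> x^16/(1-x^7) + (x^3/16)*(x/16)/(1 - x/16)" using upb low by (simp add: TT_def)
    also have "\<dots> \<le> 14/10000" by (rule tail_num[OF xp x3])
    finally show ?thesis .
  qed
  have ST: "suminf T \<ge> 1 - 2*x + d2 - d3 - TT"
    using split sum7[of T m] tailT lowT block blockb by (simp add: TT_def)
  have pos_final: "1 - 2*x + d2 - d3 - TT > 0"
    using good
  proof
    assume "Q (m+4) \<ge> 16"
    then have "x^2 \<le> (1/4)^2" using xu' by (simp add: u_def power_divide frac_le)
    then have "x \<le> 1/4" by (rule power2_le_imp_le) simp
    show ?thesis
      by (rule caseA_num[OF xp \<open>x \<le> 1/4\<close>]) (use ep e6b e0b TTb in \<open>auto simp: d2_def d3_def less_imp_le\<close>)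
  next
    assume B: "Q (m+5) \<le> 21/20 * Q (m+4) \<and> 21/20 * Q (m+2) \<ge> Q (m+4)"
    have x4u: "x^4 = x^2 / u" using xu' by (simp add: power4_eq_xxxx power2_eq_square)
    have "e (m+5) \<ge> (20/21) * x^4"
    proof -
      have "x^2 / (21/20 * u) \<le> x^2 / Q (m+5)" using B Qpos[of "m+5"] xp by (intro divide_left_mono) (auto simp: u_def)
      then show ?thesis using e5 x4u by (simp add: field_simps)
    qed
    moreover have "e (m+1) \<ge> x^4"
    proof -
      have "x^2 / u \<le> x^2 / Q (m+3)" using Q12 q3 xp by (intro divide_left_mono) auto
      then show ?thesis using e1 x4u by simp
    qed
    ultimately have d2b: "d2 \<ge> (41/21) * x^4" by (simp add: d2_def)
    have "e m \<le> (21/20)^3 * x^9"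
    proof -
      have q2u: "Q (m+2) \<ge> (20/21) * u" using B by (simp add: u_def)
      have "Q (m+3)^2 * Q (m+2) \<ge> ((20/21) * u)^2 * ((20/21) * u)" using q2u Q12 up
        by (intro mult_mono power_mono) auto
      then have "x^3 / (Q (m+3)^2 * Q (m+2)) \<le> x^3 / (((20/21) * u)^2 * ((20/21) * u))"
        using xp up q3 by (intro divide_left_mono) auto
      also have "x^3 / (((20/21) * u)^2 * ((20/21) * u)) = (21/20)^3 * (x^3 * (1/u^3))"
        by (simp add: power2_eq_square power3_eq_cube field_simps)
      also have "\<dots> = (21/20)^3 * x^9" using u3x by (simp add: power_add[symmetric])
      finally show ?thesis using e0 by simp
    qed
    then have d3b: "d3 \<le> (1 + (21/20)^3) * x^9" using e6b by (simp add: d3_def algebra_simps)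
    show ?thesis by (rule caseB_num[OF xp x3 d2b d3b TTb])
  qed
  show ?thesis using Tsum ST pos_final by simp
qed

end


lemma Re_pow_circle:
  fixes w :: complex
  assumes "norm w = 1"
  shows "Re (w^2) = 2 * (Re w)^2 - 1" "Re (w^3) = 4 * (Re w)^3 - 3 * Re w"
proof -
  have n: "(Re w)^2 + (Im w)^2 = 1" using assms by (simp add: cmod_power2[symmetric])
  have "Re (w^2) = (Re w)^2 - (Im w)^2" by (simp add: power2_eq_square)
  then show "Re (w^2) = 2 * (Re w)^2 - 1" using n by simp
  have "Re (w^3) = (Re w)^3 - 3 * Re w * (Im w)^2" by (simp add: power3_eq_cube power2_eq_square algebra_simps)
  moreover have "(Im w)^2 = 1 - (Re w)^2" using n by simp
  ultimately have "Re (w^3) = (Re w)^3 - 3 * Re w * (1 - (Re w)^2)" by simp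
  then show "Re (w^3) = 4 * (Re w)^3 - 3 * Re w" by (simp add: algebra_simps power2_eq_square power3_eq_cube)
qed

lemma circle_shift:
  fixes w :: complex
  assumes "norm w = 1"
  shows "w^(k+i) * cnj w ^ k = w^i" and "i \<le> k \<Longrightarrow> Re (w^(k-i) * cnj w ^ k) = Re (w^i)"
proof -
  have wc: "w * cnj w = 1" using assms by (simp add: complex_mult_cnj cmod_power2[symmetric] complex_eq_iff)
  show "w^(k+i) * cnj w ^ k = w^i"
    by (simp add: power_add mult.assoc mult.left_commute power_mult_distrib[symmetric] wc)
  assume "i \<le> k"
  then obtain n where k: "k = n + i" by (metis le_add_diff_inverse2)
  have "w^(k-i) * cnj w ^ k = cnj w ^ i * (w * cnj w)^n" using k
    by (simp add: power_add power_mult_distrib algebra_simps)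
  then have "w^(k-i) * cnj w ^ k = cnj w ^ i" using wc by simp
  then show "Re (w^(k-i) * cnj w ^ k) = Re (w^i)" by (simp flip: complex_cnj_power)
qed

lemma circle_pos:
  fixes a :: "nat \<Rightarrow> real" and m :: nat and r :: real and z :: complex
  assumes pos: "\<And>k. a k > 0"
    and Qc: "\<And>n. n \<ge> 2 \<Longrightarrow> second_quotient a n \<ge> 2 * root 3 2"
    and Qmono: "\<And>m n. 2 \<le> m \<Longrightarrow> m \<le> n \<Longrightarrow> second_quotient a m \<le> second_quotient a n"
    and entire: "\<And>z::complex. summable (\<lambda>k. complex_of_real (a k) * z ^ k)"
    and m2: "m \<ge> 2" and r: "r > 0" and r2: "r^2 = a(m+2)/a(m+4)"
    and good: "second_quotient a (m+4) \<ge> 16 \<or> (second_quotient a (m+5) \<le> 21/20 * second_quotient a (m+4)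
                 \<and> 21/20 * second_quotient a (m+2) \<ge> second_quotient a (m+4))"
    and z: "norm z = r"
  shows "Re (power_series_fun a z * cnj (complex_of_real (a (m+3)) * z ^ (m+3))) > 0"
proof -
  define k where "k = m + 3"
  define w where "w = z / complex_of_real r"
  have wn: "norm w = 1" using z r by (simp add: w_def norm_divide)
  have zw: "z = complex_of_real r * w" using r by (simp add: w_def)
  define T where "T j = ee a r k j * Re (w^j * cnj w ^ k)" for j
  have summ: "summable (\<lambda>j. a j * r^j)"
  proof -
    have "(\<lambda>j. complex_of_real (a j) * complex_of_real r ^ j) sums (\<Sum>j. complex_of_real (a j) * complex_of_real r ^ j)"
      using entire[of "complex_of_real r"] by (simp add: summable_sums)
    from sums_Re[OF this] show ?thesis by (auto simp: sums_iff simp flip: of_real_power)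
  qed
  have t: "-1 \<le> Re w" "Re w \<le> 1" using abs_Re_le_cmod[of w] wn by auto
  have Tb: "\<bar>T j\<bar> \<le> ee a r k j" for j
  proof -
    have "\<bar>Re (w^j * cnj w ^ k)\<bar> \<le> cmod (w^j * cnj w ^ k)" by (rule abs_Re_le_cmod)
    also have "\<dots> = 1" using wn by (simp add: norm_mult norm_power)
    finally show ?thesis using ee_pos[OF pos Qc Qmono r, of k j] by (simp add: T_def abs_mult)
  qed
  have Tp: "T (k+i) = ee a r k (k+i) * Re (w^i)" for i using circle_shift(1)[OF wn, of k i] by (simp add: T_def)
  have Tm: "i \<le> k \<Longrightarrow> T (k-i) = ee a r k (k-i) * Re (w^i)" for i using circle_shift(2)[OF wn, of i k] by (simp add: T_def)
  have R2: "Re (w^2) = 2 * (Re w)^2 - 1" and R3: "Re (w^3) = 4 * (Re w)^3 - 3 * Re w"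
    using Re_pow_circle[OF wn] by auto
  have idx: "k+1 = m+4" "k+2 = m+5" "k+3 = m+6" "k-1 = m+2" "k-2 = m+1" "k-3 = m" "k+0 = m+3"
    by (simp_all add: k_def)
  have main: "summable T \<and> suminf T > 0"
  proof (rule main_est[OF pos Qc Qmono m2 r r2 good summ t])
    show "\<bar>T j\<bar> \<le> ee a r (m+3) j" for j using Tb[of j] by (simp add: k_def)
    show "T (m+3) = 1" using Tp[of 0, unfolded idx] ee_self[OF pos Qc Qmono r, of k] by (simp add: k_def)
    show "T (m+4) = ee a r (m+3) (m+4) * Re w" using Tp[of 1, unfolded idx] by (simp add: k_def)
    show "T (m+2) = ee a r (m+3) (m+2) * Re w" using Tm[of 1, unfolded idx] by (simp add: k_def)
    show "T (m+5) = ee a r (m+3) (m+5) * (2 * (Re w)^2 - 1)" using Tp[of 2, unfolded idx] R2 by (simp add: k_def)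
    show "T (m+1) = ee a r (m+3) (m+1) * (2 * (Re w)^2 - 1)" using Tm[of 2, unfolded idx] R2 by (simp add: k_def)
    show "T (m+6) = ee a r (m+3) (m+6) * (4 * (Re w)^3 - 3 * Re w)" using Tp[of 3, unfolded idx] R3 by (simp add: k_def)
    show "T m = ee a r (m+3) m * (4 * (Re w)^3 - 3 * Re w)" using Tm[of 3, unfolded idx] R3 by (simp add: k_def)
  qed
  define W where "W = cnj (complex_of_real (a k) * z ^ k)"
  define C where "C = (a k)^2 * r^(2*k)"
  have Cp: "C > 0" using pos[of k] r by (simp add: C_def)
  have key: "Re (complex_of_real (a j) * z^j * W) = C * T j" for j
  proof -
    have ReM: "Re (complex_of_real c * X) = c * Re X" for c X by simp
    have eq: "complex_of_real (a j) * z^j * W = complex_of_real (a j * a k * r^(j+k)) * (w^j * cnj w ^ k)"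
      by (simp add: W_def zw power_mult_distrib power_add algebra_simps)
    have "Re (complex_of_real (a j) * z^j * W) = a j * a k * r^(j+k) * Re (w^j * cnj w ^ k)"
      by (simp only: eq ReM)
    also have "\<dots> = C * T j"
    proof -
      have eeq: "ee a r k j * (a k * r^k) = a j * r^j" using pos[of k] r by (simp add: ee_def[OF pos Qc Qmono])
      have r2k: "r^(2*k) = r^k * r^k" "r^(k*2) = r^k * r^k" by (simp_all add: mult_2 mult_2_right power_add)
      have gen: "C * (ee a r k j * R) = a j * a k * r^(j+k) * R" for R :: real
      proof -
        have "C * (ee a r k j * R) = (a k * r^k) * (ee a r k j * (a k * r^k)) * R"
          by (simp add: C_def r2k power2_eq_square algebra_simps)
        also have "\<dots> = (a k * r^k) * (a j * r^j) * R" by (simp only: eeq)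
        also have "\<dots> = a j * a k * r^(j+k) * R" by (simp add: power_add algebra_simps)
        finally show ?thesis .
      qed
      show ?thesis unfolding T_def by (rule gen[symmetric])
    qed
    finally show ?thesis .
  qed
  have s1: "summable (\<lambda>j. complex_of_real (a j) * z^j)" by (rule entire)
  have "power_series_fun a z * W = (\<Sum>j. complex_of_real (a j) * z^j * W)"
    unfolding power_series_fun_def by (rule suminf_mult2[OF s1])
  then have "Re (power_series_fun a z * W) = (\<Sum>j. Re (complex_of_real (a j) * z^j * W))"
    using Re_suminf[OF summable_mult2[OF s1, of W]] by simp
  also have "\<dots> = (\<Sum>j. C * T j)" using key by simp
  also have "\<dots> = C * suminf T" using main by (simp add: suminf_mult)
  finally have "Re (power_series_fun a z * W) = C * suminf T" .
  then show ?thesis using Cp main by (simp add: W_def k_def)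
qed


lemma Q_mono_gen:
  fixes a :: "nat \<Rightarrow> real"
  assumes mono: "\<And>n. n \<ge> 2 \<Longrightarrow> second_quotient a n \<le> second_quotient a (Suc n)"
  shows "2 \<le> m \<Longrightarrow> m \<le> n \<Longrightarrow> second_quotient a m \<le> second_quotient a n"
proof (induction n)
  case 0 then show ?case by simp
next
  case (Suc n)
  show ?case
  proof (cases "m = Suc n")
    case True then show ?thesis by simp
  next
    case False
    then have "m \<le> n" using Suc by simp
    then show ?thesis using Suc.IH[OF Suc.prems(1)] mono[of n] Suc.prems(1) by linarith
  qed
qed

lemma eventually_good:
  fixes a :: "nat \<Rightarrow> real"
  assumes pos: "\<And>k. a k > 0"
    and Qc: "\<And>n. n \<ge> 2 \<Longrightarrow> second_quotient a n \<ge> 2 * root 3 2"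
    and Qmono: "\<And>m n. 2 \<le> m \<Longrightarrow> m \<le> n \<Longrightarrow> second_quotient a m \<le> second_quotient a n"
  shows "\<exists>K\<ge>2. \<forall>m\<ge>K. second_quotient a (m+4) \<ge> 16 \<or> (second_quotient a (m+5) \<le> 21/20 * second_quotient a (m+4)
                 \<and> 21/20 * second_quotient a (m+2) \<ge> second_quotient a (m+4))"
proof (cases "\<exists>N\<ge>2. second_quotient a N \<ge> 16")
  case True
  then obtain N where N: "N \<ge> 2" "second_quotient a N \<ge> 16" by blast
  show ?thesis
  proof (intro exI[of _ N] conjI allI impI)
    fix m assume "N \<le> m"
    then have "second_quotient a N \<le> second_quotient a (m+4)" using Qmono N by simp
    then show "second_quotient a (m+4) \<ge> 16 \<or> (second_quotient a (m+5) \<le> 21/20 * second_quotient a (m+4)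
                 \<and> 21/20 * second_quotient a (m+2) \<ge> second_quotient a (m+4))" using N by simp
  qed (use N in simp)
next
  case False
  then have lt: "second_quotient a n < 16" if "n \<ge> 2" for n using that by force
  define X where "X = second_quotient a ` {2..}"
  define L where "L = Sup X"
  have ne: "X \<noteq> {}" by (auto simp: X_def)
  have bdd: "bdd_above X" using lt by (auto simp: X_def bdd_above_def intro!: exI[of _ 16] less_imp_le)
  have up: "second_quotient a n \<le> L" if "n \<ge> 2" for n
    unfolding L_def by (rule cSup_upper) (use that bdd in \<open>auto simp: X_def\<close>)
  have c0: "(2 * root 3 2 :: real) \<ge> 5/2" by (rule c0_ge)
  have Lp: "L > 0" using up[of 2] Qc[of 2] c0 by simp
  have "20/21 * L < L" using Lp by simp
  then obtain y where "y \<in> X" "20/21 * L < y" using less_cSup_iff[OF ne bdd] unfolding L_def by blast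
  then obtain N where N: "N \<ge> 2" "20/21 * L < second_quotient a N" by (auto simp: X_def)
  show ?thesis
  proof (intro exI[of _ N] conjI allI impI)
    fix m assume m: "N \<le> m"
    have q2: "second_quotient a N \<le> second_quotient a (m+2)" using Qmono N m by simp
    have q4: "second_quotient a N \<le> second_quotient a (m+4)" using Qmono N m by simp
    have "second_quotient a (m+5) \<le> L" using up by simp
    moreover have "second_quotient a (m+4) \<le> L" using up by simp
    ultimately show "second_quotient a (m+4) \<ge> 16 \<or> (second_quotient a (m+5) \<le> 21/20 * second_quotient a (m+4)
                 \<and> 21/20 * second_quotient a (m+2) \<ge> second_quotient a (m+4))"
      using q2 q4 N by simp
  qed (use N in simp)
qed

theorem theorem1:
  fixes a :: "nat \<Rightarrow> real"
  assumes entire: "\<And>z::complex. summable (\<lambda>k. complex_of_real (a k) * z ^ k)"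
    and pos: "\<And>k. a k > 0"
    and q2: "2 * root 3 2 \<le> second_quotient a 2"
    and mono: "\<And>n. n \<ge> 2 \<Longrightarrow> second_quotient a n \<le> second_quotient a (Suc n)"
  shows "finite {z. power_series_fun a z = 0 \<and>
                  (z \<notin> \<real> \<or> deriv (power_series_fun a) z = 0)}"
proof -
  define f where "f = power_series_fun a"
  have Qmono: "\<And>m n. 2 \<le> m \<Longrightarrow> m \<le> n \<Longrightarrow> second_quotient a m \<le> second_quotient a n"
    using Q_mono_gen[OF mono] by blast
  have Qc: "\<And>n. n \<ge> 2 \<Longrightarrow> second_quotient a n \<ge> 2 * root 3 2"
    using Qmono[of 2] q2 by force
  have c0: "(2 * root 3 2 :: real) \<ge> 5/2" by (rule c0_ge)
  have holo: "f holomorphic_on UNIV"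
  proof -
    have "((\<lambda>x. \<Sum>n. complex_of_real (a n) * x^n) has_field_derivative
            (\<Sum>n. diffs (\<lambda>n. complex_of_real (a n)) n * x^n)) (at x)" for x
      by (rule termdiffs_strong_converges_everywhere[OF entire])
    then show ?thesis unfolding f_def power_series_fun_def holomorphic_on_def field_differentiable_def
      using has_field_derivative_at_within by blast
  qed
  have f0: "f 0 \<noteq> 0" using pos[of 0] by (simp add: f_def power_series_fun_def)
  have fcnj: "f (cnj z) = cnj (f z)" for z
  proof -
    have "(\<lambda>k. complex_of_real (a k) * z ^ k) sums f z" using entire[of z] by (simp add: f_def power_series_fun_def summable_sums)
    then have "(\<lambda>k. cnj (complex_of_real (a k) * z ^ k)) sums cnj (f z)" by (rule iffD2[OF sums_cnj])
    then have "(\<lambda>k. complex_of_real (a k) * cnj z ^ k) sums cnj (f z)" by simp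
    then show ?thesis by (simp add: f_def power_series_fun_def sums_iff)
  qed
  obtain K where K2: "K \<ge> 2" and good: "\<And>m. m \<ge> K \<Longrightarrow> second_quotient a (m+4) \<ge> 16 \<or> (second_quotient a (m+5) \<le> 21/20 * second_quotient a (m+4)
                 \<and> 21/20 * second_quotient a (m+2) \<ge> second_quotient a (m+4))"
    using eventually_good[OF pos Qc Qmono] by blast
  define \<rho> where "\<rho> m = sqrt (a (m+2) / a (m+4))" for m
  have \<rho>p: "\<rho> m > 0" for m using pos by (simp add: \<rho>_def)
  have \<rho>2: "(\<rho> m)^2 = a (m+2) / a (m+4)" for m using pos[of "m+2"] pos[of "m+4"] by (simp add: \<rho>_def less_imp_le)
  have \<rho>step: "(\<rho> (Suc m))^2 \<ge> 6 * (\<rho> m)^2" for m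
  proof -
    have ix: "Suc m + 2 = m+3" "Suc m + 4 = m+5" by simp_all
    have r1: "(\<rho> (Suc m))^2 = a (m+3) / a (m+5)" using \<rho>2[of "Suc m", unfolded ix] .
    have Qe: "second_quotient a (m+4) * second_quotient a (m+5) = (a (m+3) / a (m+5)) / (a (m+2) / a (m+4))"
      using pos[of "m+2"] pos[of "m+3"] pos[of "m+4"] pos[of "m+5"]
      by (simp add: second_quotient_def field_simps power2_eq_square eval_nat_numeral)
    have "(\<rho> (Suc m))^2 = (\<rho> m)^2 * (second_quotient a (m+4) * second_quotient a (m+5))"
    proof -
      have gen: "Y \<noteq> 0 \<Longrightarrow> X = Y * (X/Y)" for X Y :: real by simp
      have "a (m+2) / a (m+4) \<noteq> 0" using pos[of "m+2"] pos[of "m+4"] by simp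
      then show ?thesis unfolding r1 \<rho>2[of m] Qe by (rule gen)
    qed
    moreover have "second_quotient a (m+4) * second_quotient a (m+5) \<ge> 5/2 * (5/2)"
      using Qc[of "m+4"] Qc[of "m+5"] c0 by (intro mult_mono) auto
    ultimately show ?thesis using \<rho>p[of m] by (simp add: mult_left_mono)
  qed
  have \<rho>mono: "\<rho> m < \<rho> (Suc m)" for m
  proof -
    have "(\<rho> m)^2 < (\<rho> (Suc m))^2" using \<rho>step[of m] \<rho>p[of m] by (smt (verit) zero_less_power)
    then show ?thesis using \<rho>p by (simp add: power_less_imp_less_base less_imp_le)
  qed
  have \<rho>grow: "(\<rho> (K+n))^2 \<ge> (1 + real n) * (\<rho> K)^2" for n
  proof (induction n)
    case 0 then show ?case by simp
  next
    case (Suc n)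
    have "(1 + real (Suc n)) * (\<rho> K)^2 \<le> 6 * ((1 + real n) * (\<rho> K)^2)"
      using \<rho>p[of K] by (simp add: algebra_simps)
    also have "\<dots> \<le> 6 * (\<rho> (K+n))^2" using Suc by simp
    also have "\<dots> \<le> (\<rho> (K + Suc n))^2" using \<rho>step[of "K+n"] by simp
    finally show ?case .
  qed
  have circ: "Re (f z * cnj (complex_of_real (a (m+3)) * z ^ (m+3))) > 0" if "m \<ge> K" "norm z = \<rho> m" for m z
    unfolding f_def
    by (rule circle_pos[OF pos Qc Qmono entire _ \<rho>p \<rho>2 good that(2)]) (use that K2 in auto)
  have fnz: "f z \<noteq> 0" if "m \<ge> K" "norm z = \<rho> m" for m z using circ[OF that] by auto
  define Z where "Z r = {p. norm p < r \<and> f p = 0}" for r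
  have cnt: "finite (Z (\<rho> m)) \<and> (\<Sum>p\<in>Z (\<rho> m). zorder f p) = int (m+3)" if "m \<ge> K" for m
    using rouche_count[OF holo _ \<rho>p, of "complex_of_real (a (m+3))" m "m+3"] circ[OF that] pos[of "m+3"]
    by (auto simp: Z_def)
  have good_zero: "p \<in> \<real> \<and> deriv f p \<noteq> 0" if fp: "f p = 0" and np: "norm p \<ge> \<rho> K" for p
  proof -
    obtain n where n0': "(norm p)^2 < real n * (\<rho> K)^2"
      using reals_Archimedean3[OF zero_less_power[OF \<rho>p[of K], of 2]] by blast
    moreover have "(\<rho> K)^2 > 0" using \<rho>p[of K] by simp
    moreover have "(1 + real n) * (\<rho> K)^2 = (\<rho> K)^2 + real n * (\<rho> K)^2" by (simp add: algebra_simps)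
    ultimately have n: "(1 + real n) * (\<rho> K)^2 > (norm p)^2" by linarith
    have "(norm p)^2 < (\<rho> (K+n))^2" using n \<rho>grow[of n] by linarith
    then have ex: "norm p < \<rho> (K+n)" using \<rho>p by (simp add: power_less_imp_less_base less_imp_le)
    define n0 where "n0 = (LEAST n. norm p < \<rho> (K+n))"
    have n0: "norm p < \<rho> (K+n0)" unfolding n0_def by (rule LeastI[of "\<lambda>n. norm p < \<rho> (K+n)", OF ex])
    have "n0 \<noteq> 0"
    proof
      assume "n0 = 0"
      then show False using n0 np by simp
    qed
    then obtain n1 where n1: "n0 = Suc n1" by (cases n0) auto
    have "\<not> norm p < \<rho> (K+n1)" using not_less_Least[of n1 "\<lambda>n. norm p < \<rho> (K+n)"] n1 n0_def by simp
    define m where "m = K + n1"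
    have mK: "m \<ge> K" by (simp add: m_def)
    have lo: "\<rho> m \<le> norm p" using \<open>\<not> norm p < \<rho> (K+n1)\<close> by (simp add: m_def)
    have hi: "norm p < \<rho> (Suc m)" using n0 n1 by (simp add: m_def)
    have lo': "\<rho> m < norm p" using lo fnz[OF mK] fp by force
    define Ann where "Ann = {q. \<rho> m < norm q \<and> norm q < \<rho> (Suc m) \<and> f q = 0}"
    have c1: "finite (Z (\<rho> m))" "(\<Sum>q\<in>Z (\<rho> m). zorder f q) = int (m+3)" using cnt[OF mK] by auto
    have c2: "finite (Z (\<rho> (Suc m)))" "(\<Sum>q\<in>Z (\<rho> (Suc m)). zorder f q) = int (Suc m+3)"
      using cnt[of "Suc m"] mK by auto
    have un: "Z (\<rho> (Suc m)) = Z (\<rho> m) \<union> Ann"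
    proof
      show "Z (\<rho> (Suc m)) \<subseteq> Z (\<rho> m) \<union> Ann"
      proof
        fix q assume q: "q \<in> Z (\<rho> (Suc m))"
        then have "norm q \<noteq> \<rho> m" using fnz[OF mK] by (auto simp: Z_def)
        then show "q \<in> Z (\<rho> m) \<union> Ann" using q by (auto simp: Z_def Ann_def)
      qed
      show "Z (\<rho> m) \<union> Ann \<subseteq> Z (\<rho> (Suc m))" using \<rho>mono[of m] by (auto simp: Z_def Ann_def)
    qed
    have dis: "Z (\<rho> m) \<inter> Ann = {}" by (auto simp: Z_def Ann_def)
    have finA: "finite Ann" using c2(1) un by simp
    have sumA: "(\<Sum>q\<in>Ann. zorder f q) = 1"
    proof -
      have "(\<Sum>q\<in>Z (\<rho> (Suc m)). zorder f q) = (\<Sum>q\<in>Z (\<rho> m). zorder f q) + (\<Sum>q\<in>Ann. zorder f q)"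
        unfolding un by (rule sum.union_disjoint[OF c1(1) finA dis])
      then show ?thesis using c1(2) c2(2) by simp
    qed
    have zpos: "zorder f q \<ge> 1" if "q \<in> Ann" for q
      using zorder_pos_entire[OF holo f0, of q] that by (auto simp: Ann_def)
    have pA: "p \<in> Ann" using lo' hi fp by (simp add: Ann_def)
    have cpA: "cnj p \<in> Ann" using lo' hi fp fcnj[of p] by (simp add: Ann_def)
    have real: "cnj p = p"
    proof (rule ccontr)
      assume ne: "cnj p \<noteq> p"
      have "(\<Sum>q\<in>{p, cnj p}. zorder f q) \<le> (\<Sum>q\<in>Ann. zorder f q)"
        by (rule sum_mono2[OF finA]) (use pA cpA zpos in \<open>auto intro: order_trans[OF zero_le_one]\<close>)
      moreover have "(\<Sum>q\<in>{p, cnj p}. zorder f q) = zorder f p + zorder f (cnj p)" using ne by simp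
      ultimately show False using zpos[OF pA] zpos[OF cpA] sumA by linarith
    qed
    have z0: "0 \<le> zorder f x" if "x \<in> Ann \<and> x \<noteq> p" for x using zpos[of x] that by simp
    have "zorder f p \<le> (\<Sum>q\<in>Ann. zorder f q)"
      by (rule member_le_sum[OF pA z0 finA]) auto
    then have "zorder f p = 1" using sumA zpos[OF pA] by linarith
    then have "deriv f p \<noteq> 0" by (rule zorder1_deriv[OF holo f0])
    then show ?thesis using real by (simp add: Reals_cnj_iff)
  qed
  have "{z. f z = 0 \<and> (z \<notin> \<real> \<or> deriv f z = 0)} \<subseteq> {p. norm p \<le> \<rho> K \<and> f p = 0}"
    using good_zero by force
  moreover have "finite {p. norm p \<le> \<rho> K \<and> f p = 0}" by (rule finite_zeros_cball[OF holo f0])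
  ultimately show ?thesis unfolding f_def by (rule finite_subset)
qed

end
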